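(* Let $d\ge 3$, $m=d$, $\lambda>0$, $w_\star,v\in\mathbb{S}^{d-1}$ with $v^\top w_\star=0$, $Q=I_d+\lambda vv^\top$, $P_\perp=I_d-w_\star w_\star^\top-vv^\top$. Let $\mathcal L(W)=\mathbb{E}\big(y-\sum_{j=1}^m(w_j^\top x)^2\big)^2$ with $x\sim\mathcal N(0,Q)$, $y=(x^\top w_\star)^2+\nu$, $\nu\sim\mathcal N(0,\sigma^2)$ independent of $x$. Let $\tilde W(t)$ solve the gradient flow $\dot{\tilde W}(t)=-\nabla_W\mathcal L(\tilde W(t))$ and suppose that $\tilde M(t):=\tilde W(t)\tilde W(t)^\top=\tilde a(t)\,w_\star w_\star^\top+\tilde b(t)\,vv^\top+\tilde c(t)\,P_\perp$ for scalars $\tilde a(t),\tilde b(t),\tilde c(t)$. Then \[ \dot{\tilde a}=-2g_{w_\star}\tilde a,\qquad \dot{\tilde b}=-2g_v\tilde b,\qquad \dot{\tilde c}=-2g_\perp\tilde c, \] where $\tilde r:=\tilde a+(1+\lambda)\tilde b+(d-2)\tilde c$ and \[ g_{w_\star}=8(\tilde a-1)+4(\tilde r-1),\quad g_v=8(1+\lambda)^2\tilde b+4(1+\lambda)(\tilde r-1),\quad g_\perp=8\tilde c+4(\tilde r-1). \] *)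

theory Defs
  imports "HOL-Analysis.Analysis" "HOL-Probability.Probability"
begin

definition outer :: "real^'n \<Rightarrow> real^'n \<Rightarrow> real^'n^'n" where
  "outer u w = (\<chi> i j. u $ i * w $ j)"

definition gauss_density :: "real^'n^'n \<Rightarrow> real^'n \<Rightarrow> real" where
  "gauss_density Q x =
     exp (- (x \<bullet> (matrix_inv Q *v x)) / 2) / sqrt ((2 * pi) ^ CARD('n) * det Q)"

text \<open>Population loss L(W) = E (y - sum_j (w_j^T x)^2)^2 with x ~ N(0,Q),
  y = (x^T w_star)^2 + nu, nu ~ N(0, sigma^2) independent of x.
  The j-th neuron w_j is the row W $ j (m = d neurons).\<close>
definition pop_loss :: "real^'n^'n \<Rightarrow> real^'n \<Rightarrow> real \<Rightarrow> real^'n^'n \<Rightarrow> real" where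
  "pop_loss Q ws \<sigma> W =
     (\<integral>x. (\<integral>\<nu>. (((x \<bullet> ws)\<^sup>2 + \<nu>) - (\<Sum>j\<in>UNIV. (W $ j \<bullet> x)\<^sup>2))\<^sup>2
              \<partial>(density lborel (normal_density 0 \<sigma>)))
       \<partial>(density lborel (gauss_density Q)))"

end

theory Submission
  imports Defs
begin

definition stdg :: "'a::euclidean_space \<Rightarrow> real" where
  "stdg z = (\<Prod>b\<in>Basis. std_normal_density (z \<bullet> b))"

lemma psf_lborel: "product_sigma_finite (\<lambda>_::'a. lborel::real measure)"
  unfolding product_sigma_finite_def by (simp add: lborel.sigma_finite_measure_axioms)

lemma emb_inner: "(b::'a::euclidean_space) \<in> Basis \<Longrightarrow> (\<Sum>c\<in>Basis. f c *\<^sub>R c) \<bullet> b = f b"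
  by (simp add: inner_sum_left inner_Basis if_distrib cong: if_cong)

lemma prod_moment:
  fixes k :: "'a::euclidean_space \<Rightarrow> real \<Rightarrow> real"
  assumes int: "\<And>b. b \<in> Basis \<Longrightarrow> integrable lborel (\<lambda>t. std_normal_density t * k b t)"
  shows "has_bochner_integral lborel (\<lambda>z::'a. stdg z * (\<Prod>b\<in>Basis. k b (z \<bullet> b)))
           (\<Prod>b\<in>Basis. \<integral>t. std_normal_density t * k b t \<partial>lborel)"
proof -
  define K where "K = (\<lambda>b t. std_normal_density t * k b t)"
  have eq: "stdg z * (\<Prod>b\<in>Basis. k b (z \<bullet> b)) = (\<Prod>b\<in>Basis. K b (z \<bullet> b))" for z :: 'a
    by (simp add: stdg_def K_def prod.distrib)
  have Km[measurable]: "K b \<in> borel_measurable borel" if "b \<in> Basis" for b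
    using borel_measurable_integrable[OF int[OF that]] by (simp add: K_def)
  have Fm: "(\<lambda>z::'a. \<Prod>b\<in>Basis. K b (z \<bullet> b)) \<in> borel_measurable borel"
    by (intro borel_measurable_prod) (auto intro: measurable_compose[OF _ Km])
  have embm: "(\<lambda>f. \<Sum>b\<in>Basis. f b *\<^sub>R b) \<in> measurable (\<Pi>\<^sub>M b\<in>Basis. lborel) (borel :: 'a measure)"
    by measurable
  have comp: "(\<Prod>b\<in>Basis. K b ((\<Sum>c\<in>Basis. f c *\<^sub>R c) \<bullet> b)) = (\<Prod>b\<in>Basis. K b (f b))" for f :: "'a \<Rightarrow> real"
    by (intro prod.cong refl) (simp add: emb_inner)
  have "has_bochner_integral (\<Pi>\<^sub>M b\<in>Basis. lborel) (\<lambda>f. \<Prod>b\<in>Basis. K b (f b))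
          (\<Prod>b\<in>Basis. \<integral>t. K b t \<partial>lborel)"
    unfolding has_bochner_integral_iff
    apply (rule conjI)
     apply (rule product_sigma_finite.product_integrable_prod[OF psf_lborel]) using int apply (auto simp: K_def)[2]
    apply (rule product_sigma_finite.product_integral_prod[OF psf_lborel]) using int apply (auto simp: K_def)
    done
  then have "has_bochner_integral (distr (\<Pi>\<^sub>M b\<in>Basis. lborel) borel (\<lambda>f. \<Sum>b\<in>Basis. f b *\<^sub>R b))
       (\<lambda>z::'a. \<Prod>b\<in>Basis. K b (z \<bullet> b)) (\<Prod>b\<in>Basis. \<integral>t. K b t \<partial>lborel)"
    by (intro has_bochner_integral_distr[OF Fm embm]) (simp add: comp)
  then show ?thesis
    by (simp add: lborel_eq[symmetric] eq K_def)
qed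

definition mom :: "nat \<Rightarrow> real" where
  "mom n = (\<integral>t. std_normal_density t * t ^ n \<partial>lborel)"

lemma mom_0[simp]: "mom 0 = 1" by (simp add: mom_def)
lemma mom_odd: "odd n \<Longrightarrow> mom n = 0"
  by (auto simp: mom_def elim!: oddE intro: integral_std_normal_moment_odd)
lemma mom_1[simp]: "mom 1 = 0" by (simp add: mom_odd)
lemma mom_3[simp]: "mom 3 = 0" by (simp add: mom_odd)
lemma mom_2[simp]: "mom 2 = 1"
  using integral_std_normal_moment_even[of 1] by (simp add: mom_def)
lemma mom_4[simp]: "mom 4 = 3"
  using integral_std_normal_moment_even[of 2] by (simp add: mom_def fact_numeral)

lemma mom_Suc[simp]: "mom (Suc 0) = 0" "mom (Suc (Suc 0)) = 1" "mom (Suc (Suc (Suc 0))) = 0"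
  "mom (Suc (Suc (Suc (Suc 0)))) = 3"
  using mom_1 mom_2 mom_3 mom_4 by (simp_all add: numeral_eq_Suc)

lemma mono_list:
  assumes "set bs \<subseteq> (Basis::'a::euclidean_space set)"
  shows "(\<Prod>b\<in>Basis. (z \<bullet> b) ^ count_list bs b) = prod_list (map (\<lambda>c. z \<bullet> c) bs)"
  using assms
proof (induction bs)
  case Nil then show ?case by simp
next
  case (Cons c bs)
  have "(\<Prod>b\<in>Basis. (z \<bullet> b) ^ count_list (c # bs) b)
     = (\<Prod>b\<in>Basis. (if b = c then z \<bullet> b else 1) * (z \<bullet> b) ^ count_list bs b)"
    by (intro prod.cong refl) auto
  also have "\<dots> = (z \<bullet> c) * (\<Prod>b\<in>Basis. (z \<bullet> b) ^ count_list bs b)"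
    using Cons.prems by (simp add: prod.distrib prod.delta')
  finally show ?case using Cons by simp
qed

lemma coord_moment:
  assumes "set bs \<subseteq> (Basis::'a::euclidean_space set)"
  shows "has_bochner_integral lborel (\<lambda>z::'a. stdg z * prod_list (map (\<lambda>c. z \<bullet> c) bs))
           (\<Prod>b\<in>Basis. mom (count_list bs b))"
  using prod_moment[of "\<lambda>b t. t ^ count_list bs b"]
  by (simp add: mono_list[OF assms] mom_def integrable_std_normal_moment)

lemma coord_moment_odd:
  assumes "set bs \<subseteq> (Basis::'a::euclidean_space set)" "odd (length bs)"
  shows "(\<Prod>b\<in>Basis. mom (count_list bs b)) = 0"
proof -
  have "sum (count_list bs) Basis = length bs"
    using assms(1) by (simp add: sum_count_set)
  then obtain b where "b \<in> Basis" "odd (count_list bs b)"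
    using assms(2) by (metis dvd_sum)
  then show ?thesis by (metis finite_Basis mom_odd prod_zero)
qed

lemma prod_Basis_set:
  assumes "set bs \<subseteq> (Basis::'a::euclidean_space set)"
  shows "(\<Prod>b\<in>Basis. mom (count_list bs b)) = (\<Prod>b\<in>set bs. mom (count_list bs b))"
  using assms by (intro prod.mono_neutral_right) (auto simp: count_list_0_iff)

lemma coord2:
  assumes "b1 \<in> (Basis::'a::euclidean_space set)" "b2 \<in> Basis"
  shows "(\<Prod>b\<in>Basis. mom (count_list [b1,b2] b)) = (if b1 = b2 then 1 else 0)"
  using assms by (subst prod_Basis_set) auto

lemma coord4:
  assumes "b1 \<in> (Basis::'a::euclidean_space set)" "b2 \<in> Basis" "b3 \<in> Basis" "b4 \<in> Basis"
  shows "(\<Prod>b\<in>Basis. mom (count_list [b1,b2,b3,b4] b)) =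
     (if b1 = b2 \<and> b3 = b4 then 1 else 0) + (if b1 = b3 \<and> b2 = b4 then 1 else 0)
     + (if b1 = b4 \<and> b2 = b3 then 1 else 0)"
  using assms by (subst prod_Basis_set, simp) 
    (cases "b1=b2"; cases "b1=b3"; cases "b1=b4"; cases "b2=b3"; cases "b2=b4"; cases "b3=b4"; simp add: insert_commute)

lemma inner_expand: "(z::'a::euclidean_space) \<bullet> p = (\<Sum>b\<in>Basis. (p \<bullet> b) * (z \<bullet> b))"
  by (subst euclidean_inner) (simp add: mult.commute)

lemma lin_step:
  fixes Y :: "'a::euclidean_space \<Rightarrow> real"
  assumes "\<And>b. b \<in> Basis \<Longrightarrow> has_bochner_integral lborel (\<lambda>z. stdg z * ((z \<bullet> b) * Y z)) (b \<bullet> u)"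
  shows "has_bochner_integral lborel (\<lambda>z. stdg z * ((z \<bullet> p) * Y z)) (p \<bullet> u)"
proof -
  have "has_bochner_integral lborel (\<lambda>z. \<Sum>b\<in>Basis. (p \<bullet> b) * (stdg z * ((z \<bullet> b) * Y z)))
          (\<Sum>b\<in>Basis. (p \<bullet> b) * (b \<bullet> u))"
    by (intro has_bochner_integral_sum has_bochner_integral_mult_right assms)
  moreover have "(\<lambda>z. \<Sum>b\<in>Basis. (p \<bullet> b) * (stdg z * ((z \<bullet> b) * Y z))) = (\<lambda>z. stdg z * ((z \<bullet> p) * Y z))"
    by (rule ext) (simp add: inner_expand[of z p for z] sum_distrib_left sum_distrib_right mult_ac)
  moreover have "(\<Sum>b\<in>Basis. (p \<bullet> b) * (b \<bullet> u)) = p \<bullet> u"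
    by (simp add: euclidean_inner[of p u] inner_commute)
  ultimately show ?thesis by simp
qed

lemma iss0: "has_bochner_integral lborel (\<lambda>z::'a::euclidean_space. stdg z) 1"
  using coord_moment[of "[]::'a list"] by simp

lemma coord_odd_int:
  assumes "set bs \<subseteq> (Basis::'a::euclidean_space set)" "odd (length bs)"
  shows "has_bochner_integral lborel (\<lambda>z::'a. stdg z * prod_list (map (\<lambda>c. z \<bullet> c) bs)) 0"
  using coord_moment[OF assms(1)] unfolding coord_moment_odd[OF assms] .

lemma coordB: "b \<in> Basis \<Longrightarrow> c \<in> Basis \<Longrightarrow> (if b = c then 1 else 0) = b \<bullet> (c::'a::euclidean_space)"
  by (simp add: inner_Basis)

lemma iss1: "has_bochner_integral lborel (\<lambda>z::'a::euclidean_space. stdg z * (z \<bullet> p)) 0"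
proof -
  have "has_bochner_integral lborel (\<lambda>z::'a. stdg z * ((z \<bullet> p) * 1)) (p \<bullet> 0)"
  proof (rule lin_step)
    fix b :: 'a assume b: "b \<in> Basis"
    show "has_bochner_integral lborel (\<lambda>z. stdg z * ((z \<bullet> b) * 1)) (b \<bullet> 0)"
      using coord_odd_int[of "[b]"] b by simp
  qed
  then show ?thesis by simp
qed

lemma iss2: "has_bochner_integral lborel (\<lambda>z::'a::euclidean_space. stdg z * ((z \<bullet> p) * (z \<bullet> q))) (p \<bullet> q)"
proof -
  have B: "has_bochner_integral lborel (\<lambda>z::'a. stdg z * ((z \<bullet> q) * (z \<bullet> c))) (q \<bullet> c)" if c: "c \<in> Basis" for c
  proof (rule lin_step)
    fix b :: 'a assume b: "b \<in> Basis"
    show "has_bochner_integral lborel (\<lambda>z. stdg z * ((z \<bullet> b) * (z \<bullet> c))) (b \<bullet> c)"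
      using coord_moment[of "[b,c]"] coord2[of b c] b c by (simp add: inner_Basis)
  qed
  have "has_bochner_integral lborel (\<lambda>z::'a. stdg z * ((z \<bullet> p) * (z \<bullet> q))) (p \<bullet> q)"
  proof (rule lin_step)
    fix b :: 'a assume b: "b \<in> Basis"
    show "has_bochner_integral lborel (\<lambda>z. stdg z * ((z \<bullet> b) * (z \<bullet> q))) (b \<bullet> q)"
      using B[OF b] by (simp add: mult.commute inner_commute)
  qed
  then show ?thesis by simp
qed

lemma iss3: "has_bochner_integral lborel (\<lambda>z::'a::euclidean_space. stdg z * ((z \<bullet> p) * ((z \<bullet> q) * (z \<bullet> r)))) 0"
proof -
  have S1: "has_bochner_integral lborel (\<lambda>z::'a. stdg z * ((z \<bullet> a) * ((z \<bullet> b) * (z \<bullet> c)))) 0"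
    if "a \<in> Basis" "b \<in> Basis" "c \<in> Basis" for a b c
    using coord_odd_int[of "[a,b,c]"] that by (simp add: mult.assoc)
  have S2: "has_bochner_integral lborel (\<lambda>z::'a. stdg z * ((z \<bullet> p) * ((z \<bullet> b) * (z \<bullet> c)))) 0"
    if "b \<in> Basis" "c \<in> Basis" for p b c
    using lin_step[of "\<lambda>z. (z \<bullet> b) * (z \<bullet> c)" 0 p] S1 that by simp
  have S3: "has_bochner_integral lborel (\<lambda>z::'a. stdg z * ((z \<bullet> p) * ((z \<bullet> q) * (z \<bullet> c)))) 0"
    if "c \<in> Basis" for p q c
  proof -
    have "has_bochner_integral lborel (\<lambda>z::'a. stdg z * ((z \<bullet> q) * ((z \<bullet> p) * (z \<bullet> c)))) (q \<bullet> 0)"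
    proof (rule lin_step)
      fix b :: 'a assume b: "b \<in> Basis"
      show "has_bochner_integral lborel (\<lambda>z::'a. stdg z * ((z \<bullet> b) * ((z \<bullet> p) * (z \<bullet> c)))) (b \<bullet> 0)"
        using S2[of b c p] b that by (simp add: mult_ac)
    qed
    then show ?thesis by (simp add: mult_ac)
  qed
  have "has_bochner_integral lborel (\<lambda>z::'a. stdg z * ((z \<bullet> r) * ((z \<bullet> p) * (z \<bullet> q)))) (r \<bullet> 0)"
  proof (rule lin_step)
    fix b :: 'a assume b: "b \<in> Basis"
    show "has_bochner_integral lborel (\<lambda>z::'a. stdg z * ((z \<bullet> b) * ((z \<bullet> p) * (z \<bullet> q)))) (b \<bullet> 0)"
      using S3[of b p q] b by (simp add: mult_ac)
  qed
  then show ?thesis by (simp add: mult_ac)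
qed

definition T4 :: "'a::euclidean_space \<Rightarrow> 'a \<Rightarrow> 'a \<Rightarrow> 'a \<Rightarrow> real" where
  "T4 p q r s = (p \<bullet> q) * (r \<bullet> s) + (p \<bullet> r) * (q \<bullet> s) + (p \<bullet> s) * (q \<bullet> r)"

lemma iss4: "has_bochner_integral lborel
   (\<lambda>z::'a::euclidean_space. stdg z * ((z \<bullet> p) * ((z \<bullet> q) * ((z \<bullet> r) * (z \<bullet> s))))) (T4 p q r s)"
proof -
  have S1: "has_bochner_integral lborel (\<lambda>z::'a. stdg z * ((z \<bullet> a) * ((z \<bullet> b) * ((z \<bullet> c) * (z \<bullet> e))))) (T4 a b c e)"
    if "a \<in> Basis" "b \<in> Basis" "c \<in> Basis" "e \<in> Basis" for a b c e
  proof -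
    have h: "set [a,b,c,e] \<subseteq> Basis" using that by simp
    from coord_moment[OF h] have "has_bochner_integral lborel (\<lambda>z::'a. stdg z * prod_list (map (\<lambda>c. z \<bullet> c) [a,b,c,e]))
      ((if a = b \<and> c = e then 1 else 0) + (if a = c \<and> b = e then 1 else 0) + (if a = e \<and> b = c then 1 else 0))"
      unfolding coord4[OF that] .
    moreover have "T4 a b c e = (if a = b \<and> c = e then 1 else 0) + (if a = c \<and> b = e then 1 else 0) + (if a = e \<and> b = c then 1 else 0)"
    proof -
      have ifm: "\<And>P Q. (if P then 1 else 0) * (if Q then 1 else 0) = (if P \<and> Q then (1::real) else 0)" by simp
      show ?thesis unfolding T4_def
        by (simp only: inner_Basis[OF that(1) that(2)] inner_Basis[OF that(3) that(4)]
          inner_Basis[OF that(1) that(3)] inner_Basis[OF that(2) that(4)]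
          inner_Basis[OF that(1) that(4)] inner_Basis[OF that(2) that(3)] ifm)
    qed
    ultimately show ?thesis by (simp only: prod_list.Cons prod_list.Nil list.map mult_1_right mult.assoc)
  qed
  have S2: "has_bochner_integral lborel (\<lambda>z::'a. stdg z * ((z \<bullet> p) * ((z \<bullet> b) * ((z \<bullet> c) * (z \<bullet> e))))) (T4 p b c e)"
    if "b \<in> Basis" "c \<in> Basis" "e \<in> Basis" for p b c e
  proof -
    have "has_bochner_integral lborel (\<lambda>z::'a. stdg z * ((z \<bullet> p) * ((z \<bullet> b) * ((z \<bullet> c) * (z \<bullet> e)))))
       (p \<bullet> ((c \<bullet> e) *\<^sub>R b + (b \<bullet> e) *\<^sub>R c + (b \<bullet> c) *\<^sub>R e))"
      by (rule lin_step) (use S1 that in \<open>simp add: T4_def inner_add_right algebra_simps\<close>)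
    then show ?thesis by (simp add: T4_def inner_add_right algebra_simps)
  qed
  have S3: "has_bochner_integral lborel (\<lambda>z::'a. stdg z * ((z \<bullet> p) * ((z \<bullet> q) * ((z \<bullet> c) * (z \<bullet> e))))) (T4 p q c e)"
    if "c \<in> Basis" "e \<in> Basis" for p q c e
  proof -
    have "has_bochner_integral lborel (\<lambda>z::'a. stdg z * ((z \<bullet> q) * ((z \<bullet> p) * ((z \<bullet> c) * (z \<bullet> e)))))
       (q \<bullet> ((c \<bullet> e) *\<^sub>R p + (p \<bullet> e) *\<^sub>R c + (p \<bullet> c) *\<^sub>R e))"
    proof (rule lin_step)
      fix b :: 'a assume b: "b \<in> Basis"
      have "has_bochner_integral lborel (\<lambda>z::'a. stdg z * ((z \<bullet> p) * ((z \<bullet> b) * ((z \<bullet> c) * (z \<bullet> e))))) (T4 p b c e)"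
        using S2 b that by blast
      moreover have "T4 p b c e = b \<bullet> ((c \<bullet> e) *\<^sub>R p + (p \<bullet> e) *\<^sub>R c + (p \<bullet> c) *\<^sub>R e)"
        by (simp add: T4_def inner_add_right inner_commute algebra_simps)
      ultimately show "has_bochner_integral lborel (\<lambda>z::'a. stdg z * ((z \<bullet> b) * ((z \<bullet> p) * ((z \<bullet> c) * (z \<bullet> e)))))
          (b \<bullet> ((c \<bullet> e) *\<^sub>R p + (p \<bullet> e) *\<^sub>R c + (p \<bullet> c) *\<^sub>R e))"
        by (simp add: mult_ac)
    qed
    then show ?thesis by (simp add: T4_def inner_add_right inner_commute algebra_simps)
  qed
  have S4: "has_bochner_integral lborel (\<lambda>z::'a. stdg z * ((z \<bullet> p) * ((z \<bullet> q) * ((z \<bullet> r) * (z \<bullet> e))))) (T4 p q r e)"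
    if "e \<in> Basis" for p q r e
  proof -
    have "has_bochner_integral lborel (\<lambda>z::'a. stdg z * ((z \<bullet> r) * ((z \<bullet> p) * ((z \<bullet> q) * (z \<bullet> e)))))
       (r \<bullet> ((q \<bullet> e) *\<^sub>R p + (p \<bullet> e) *\<^sub>R q + (p \<bullet> q) *\<^sub>R e))"
    proof (rule lin_step)
      fix b :: 'a assume b: "b \<in> Basis"
      have "has_bochner_integral lborel (\<lambda>z::'a. stdg z * ((z \<bullet> p) * ((z \<bullet> q) * ((z \<bullet> b) * (z \<bullet> e))))) (T4 p q b e)"
        using S3 b that by blast
      moreover have "T4 p q b e = b \<bullet> ((q \<bullet> e) *\<^sub>R p + (p \<bullet> e) *\<^sub>R q + (p \<bullet> q) *\<^sub>R e)"
        by (simp add: T4_def inner_add_right inner_commute algebra_simps)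
      ultimately show "has_bochner_integral lborel (\<lambda>z::'a. stdg z * ((z \<bullet> b) * ((z \<bullet> p) * ((z \<bullet> q) * (z \<bullet> e)))))
          (b \<bullet> ((q \<bullet> e) *\<^sub>R p + (p \<bullet> e) *\<^sub>R q + (p \<bullet> q) *\<^sub>R e))"
        by (simp add: mult_ac)
    qed
    then show ?thesis by (simp add: T4_def inner_add_right inner_commute algebra_simps)
  qed
  have "has_bochner_integral lborel (\<lambda>z::'a. stdg z * ((z \<bullet> s) * ((z \<bullet> p) * ((z \<bullet> q) * (z \<bullet> r)))))
       (s \<bullet> ((q \<bullet> r) *\<^sub>R p + (p \<bullet> r) *\<^sub>R q + (p \<bullet> q) *\<^sub>R r))"
  proof (rule lin_step)
    fix b :: 'a assume b: "b \<in> Basis"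
    have "has_bochner_integral lborel (\<lambda>z::'a. stdg z * ((z \<bullet> p) * ((z \<bullet> q) * ((z \<bullet> r) * (z \<bullet> b))))) (T4 p q r b)"
      using S4 b by blast
    moreover have "T4 p q r b = b \<bullet> ((q \<bullet> r) *\<^sub>R p + (p \<bullet> r) *\<^sub>R q + (p \<bullet> q) *\<^sub>R r)"
      by (simp add: T4_def inner_add_right inner_commute algebra_simps)
    ultimately show "has_bochner_integral lborel (\<lambda>z::'a. stdg z * ((z \<bullet> b) * ((z \<bullet> p) * ((z \<bullet> q) * (z \<bullet> r)))))
        (b \<bullet> ((q \<bullet> r) *\<^sub>R p + (p \<bullet> r) *\<^sub>R q + (p \<bullet> q) *\<^sub>R r))"
      by (simp add: mult_ac)
  qed
  then show ?thesis by (simp add: T4_def inner_add_right inner_commute algebra_simps mult_ac)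
qed

lemma sum_step:
  fixes Y :: "'a::euclidean_space \<Rightarrow> real"
  assumes "\<And>b. b \<in> Basis \<Longrightarrow> has_bochner_integral lborel (\<lambda>z. stdg z * ((z \<bullet> b) * ((z \<bullet> b) * Y z))) (F b)"
  shows "has_bochner_integral lborel (\<lambda>z. stdg z * ((z \<bullet> z) * Y z)) (\<Sum>b\<in>Basis. F b)"
proof -
  have "has_bochner_integral lborel (\<lambda>z. \<Sum>b\<in>Basis. stdg z * ((z \<bullet> b) * ((z \<bullet> b) * Y z))) (\<Sum>b\<in>Basis. F b)"
    by (intro has_bochner_integral_sum assms)
  moreover have "(\<lambda>z. \<Sum>b\<in>Basis. stdg z * ((z \<bullet> b) * ((z \<bullet> b) * Y z))) = (\<lambda>z. stdg z * ((z \<bullet> z) * Y z))"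
    by (rule ext) (simp add: euclidean_inner[of z z for z] sum_distrib_left sum_distrib_right mult_ac)
  ultimately show ?thesis by simp
qed

lemma sum_Basis_1: "(\<Sum>b\<in>(Basis::'a::euclidean_space set). b \<bullet> b) = real DIM('a)"
  by (subst sum.cong[OF refl, of _ _ "\<lambda>_. 1"]) (auto simp: inner_Basis)

lemma iR: "has_bochner_integral lborel (\<lambda>z::'a::euclidean_space. stdg z * (z \<bullet> z)) (real DIM('a))"
proof -
  have "has_bochner_integral lborel (\<lambda>z::'a. stdg z * ((z \<bullet> z) * 1)) (\<Sum>b\<in>(Basis::'a set). b \<bullet> b)"
    by (rule sum_step[where Y="\<lambda>_. 1" and F="\<lambda>b. b \<bullet> b"]) (use iss2 in \<open>simp only: mult_1_right\<close>)
  then show ?thesis by (simp add: sum_Basis_1)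
qed

lemma iR1: "has_bochner_integral lborel (\<lambda>z::'a::euclidean_space. stdg z * ((z \<bullet> z) * (z \<bullet> p))) 0"
proof -
  have "has_bochner_integral lborel (\<lambda>z::'a. stdg z * ((z \<bullet> z) * (z \<bullet> p))) (\<Sum>b\<in>(Basis::'a set). 0)"
    by (rule sum_step[where Y="\<lambda>z. z \<bullet> p" and F="\<lambda>b. 0"]) (rule iss3)
  then show ?thesis by simp
qed

lemma iR2: "has_bochner_integral lborel (\<lambda>z::'a::euclidean_space. stdg z * ((z \<bullet> z) * ((z \<bullet> p) * (z \<bullet> q))))
   ((real DIM('a) + 2) * (p \<bullet> q))"
proof -
  have "has_bochner_integral lborel (\<lambda>z::'a. stdg z * ((z \<bullet> z) * ((z \<bullet> p) * (z \<bullet> q)))) (\<Sum>b\<in>Basis. T4 b b p q)"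
    by (rule sum_step[where Y="\<lambda>z. (z \<bullet> p) * (z \<bullet> q)" and F="\<lambda>b. T4 b b p q"]) (rule iss4)
  moreover have "(\<Sum>b\<in>(Basis::'a set). T4 b b p q) = (real DIM('a) + 2) * (p \<bullet> q)"
  proof -
    have "(\<Sum>b\<in>(Basis::'a set). T4 b b p q) = (\<Sum>b\<in>(Basis::'a set). (b \<bullet> b)) * (p \<bullet> q) + 2 * (\<Sum>b\<in>(Basis::'a set). (p \<bullet> b) * (q \<bullet> b))"
      by (simp add: T4_def sum.distrib sum_distrib_left sum_distrib_right inner_commute algebra_simps)
    also have "\<dots> = (real DIM('a) + 2) * (p \<bullet> q)"
      by (simp add: sum_Basis_1 euclidean_inner[of p q, symmetric] algebra_simps)
    finally show ?thesis .
  qed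
  ultimately show ?thesis by simp
qed

lemma iRR: "has_bochner_integral lborel (\<lambda>z::'a::euclidean_space. stdg z * ((z \<bullet> z) * (z \<bullet> z)))
   (real DIM('a) * (real DIM('a) + 2))"
proof -
  have "has_bochner_integral lborel (\<lambda>z::'a. stdg z * ((z \<bullet> z) * (z \<bullet> z))) (\<Sum>b\<in>(Basis::'a set). (real DIM('a) + 2) * (b \<bullet> b))"
  proof (rule sum_step[where Y="\<lambda>z. z \<bullet> z" and F="\<lambda>b. (real DIM('a) + 2) * (b \<bullet> b)"])
    fix b :: 'a assume "b \<in> Basis"
    show "has_bochner_integral lborel (\<lambda>z. stdg z * ((z \<bullet> b) * ((z \<bullet> b) * (z \<bullet> z)))) ((real DIM('a) + 2) * (b \<bullet> b))"
      using iR2[of b b] by (simp add: mult_ac)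
  qed
  then show ?thesis by (simp add: sum_distrib_left[symmetric] sum_Basis_1 mult.commute)
qed

definition Kz :: "real \<Rightarrow> real \<Rightarrow> real \<Rightarrow> real \<Rightarrow> real \<Rightarrow> real" where
  "Kz D u1 u2 u3 s = (let k0 = (u2 + u3) * s\<^sup>2; k1 = 2 * s * (u2 + u3) in
     3 * u1\<^sup>2 + 3 * u2\<^sup>2 + u3\<^sup>2 * (D * (D + 2)) + k1\<^sup>2 + k0\<^sup>2 + 2 * u1 * u2 + 2 * u1 * u3 * (D + 2)
     + 2 * u1 * k0 + 2 * u2 * u3 * (D + 2) + 2 * u2 * k0 + 2 * u3 * k0 * D)"

lemma zmom:
  fixes w v :: "'a::euclidean_space"
  assumes ww: "w \<bullet> w = 1" and vv: "v \<bullet> v = 1" and wv: "w \<bullet> v = 0"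
  shows "has_bochner_integral lborel
    (\<lambda>z. stdg z * (u1 * (z \<bullet> w)\<^sup>2 + u2 * ((z \<bullet> v) + s)\<^sup>2 + u3 * ((z \<bullet> z) + 2 * s * (z \<bullet> v) + s\<^sup>2))\<^sup>2)
    (Kz (real DIM('a)) u1 u2 u3 s)"
proof -
  define D where "D = real DIM('a)"
  define k0 where "k0 = (u2 + u3) * s\<^sup>2"
  define k1 where "k1 = 2 * s * (u2 + u3)"
  have vw: "v \<bullet> w = 0" using wv by (simp add: inner_commute)
  have m1: "has_bochner_integral lborel (\<lambda>z::'a. stdg z * ((z \<bullet> w) * ((z \<bullet> w) * ((z \<bullet> w) * (z \<bullet> w))))) 3"
    using iss4[of w w w w] by (simp add: T4_def ww)
  have m2: "has_bochner_integral lborel (\<lambda>z::'a. stdg z * ((z \<bullet> v) * ((z \<bullet> v) * ((z \<bullet> v) * (z \<bullet> v))))) 3"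
    using iss4[of v v v v] by (simp add: T4_def vv)
  have m3: "has_bochner_integral lborel (\<lambda>z::'a. stdg z * ((z \<bullet> z) * (z \<bullet> z))) (D * (D + 2))"
    using iRR by (simp add: D_def)
  have m4: "has_bochner_integral lborel (\<lambda>z::'a. stdg z * ((z \<bullet> v) * (z \<bullet> v))) 1"
    using iss2[of v v] by (simp add: vv)
  have m5: "has_bochner_integral lborel (\<lambda>z::'a. stdg z) 1"
    using iss0 by simp
  have m6: "has_bochner_integral lborel (\<lambda>z::'a. stdg z * ((z \<bullet> w) * ((z \<bullet> w) * ((z \<bullet> v) * (z \<bullet> v))))) 1"
    using iss4[of w w v v] by (simp add: T4_def ww vv wv)
  have m7: "has_bochner_integral lborel (\<lambda>z::'a. stdg z * ((z \<bullet> z) * ((z \<bullet> w) * (z \<bullet> w)))) (D + 2)"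
    using iR2[of w w] by (simp add: D_def ww)
  have m8: "has_bochner_integral lborel (\<lambda>z::'a. stdg z * ((z \<bullet> w) * ((z \<bullet> w) * (z \<bullet> v)))) 0"
    by (rule iss3)
  have m9: "has_bochner_integral lborel (\<lambda>z::'a. stdg z * ((z \<bullet> w) * (z \<bullet> w))) 1"
    using iss2[of w w] by (simp add: ww)
  have m10: "has_bochner_integral lborel (\<lambda>z::'a. stdg z * ((z \<bullet> z) * ((z \<bullet> v) * (z \<bullet> v)))) (D + 2)"
    using iR2[of v v] by (simp add: D_def vv)
  have m11: "has_bochner_integral lborel (\<lambda>z::'a. stdg z * ((z \<bullet> v) * ((z \<bullet> v) * (z \<bullet> v)))) 0"
    by (rule iss3)
  have m12: "has_bochner_integral lborel (\<lambda>z::'a. stdg z * ((z \<bullet> z) * (z \<bullet> v))) 0"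
    by (rule iR1)
  have m13: "has_bochner_integral lborel (\<lambda>z::'a. stdg z * (z \<bullet> z)) D"
    using iR by (simp add: D_def)
  have m14: "has_bochner_integral lborel (\<lambda>z::'a. stdg z * (z \<bullet> v)) 0"
    by (rule iss1)
  have big: "has_bochner_integral lborel (\<lambda>z::'a.
      u1\<^sup>2 * (stdg z * ((z \<bullet> w) * ((z \<bullet> w) * ((z \<bullet> w) * (z \<bullet> w)))))
    + u2\<^sup>2 * (stdg z * ((z \<bullet> v) * ((z \<bullet> v) * ((z \<bullet> v) * (z \<bullet> v)))))
    + u3\<^sup>2 * (stdg z * ((z \<bullet> z) * (z \<bullet> z)))
    + k1\<^sup>2 * (stdg z * ((z \<bullet> v) * (z \<bullet> v)))
    + k0\<^sup>2 * (stdg z)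
    + (2 * u1 * u2) * (stdg z * ((z \<bullet> w) * ((z \<bullet> w) * ((z \<bullet> v) * (z \<bullet> v)))))
    + (2 * u1 * u3) * (stdg z * ((z \<bullet> z) * ((z \<bullet> w) * (z \<bullet> w))))
    + (2 * u1 * k1) * (stdg z * ((z \<bullet> w) * ((z \<bullet> w) * (z \<bullet> v))))
    + (2 * u1 * k0) * (stdg z * ((z \<bullet> w) * (z \<bullet> w)))
    + (2 * u2 * u3) * (stdg z * ((z \<bullet> z) * ((z \<bullet> v) * (z \<bullet> v))))
    + (2 * u2 * k1) * (stdg z * ((z \<bullet> v) * ((z \<bullet> v) * (z \<bullet> v))))
    + (2 * u2 * k0) * (stdg z * ((z \<bullet> v) * (z \<bullet> v)))
    + (2 * u3 * k1) * (stdg z * ((z \<bullet> z) * (z \<bullet> v)))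
    + (2 * u3 * k0) * (stdg z * (z \<bullet> z))
    + (2 * k1 * k0) * (stdg z * (z \<bullet> v)))
    (u1\<^sup>2 * 3 + u2\<^sup>2 * 3 + u3\<^sup>2 * (D * (D + 2)) + k1\<^sup>2 * 1 + k0\<^sup>2 * 1 + (2 * u1 * u2) * 1
     + (2 * u1 * u3) * (D + 2) + (2 * u1 * k1) * 0 + (2 * u1 * k0) * 1 + (2 * u2 * u3) * (D + 2)
     + (2 * u2 * k1) * 0 + (2 * u2 * k0) * 1 + (2 * u3 * k1) * 0 + (2 * u3 * k0) * D + (2 * k1 * k0) * 0)"
    by (intro has_bochner_integral_add has_bochner_integral_mult_right m1 m2 m3 m4 m5 m6 m7 m8 m9 m10 m11 m12 m13 m14)
  show ?thesis
  proof (rule has_bochner_integral_cong[THEN iffD1, OF refl _ _ big])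
    fix z :: 'a
    have sq: "(z \<bullet> w)\<^sup>2 = (z \<bullet> w) * (z \<bullet> w)" by (simp add: power2_eq_square)
    show "u1\<^sup>2 * (stdg z * ((z \<bullet> w) * ((z \<bullet> w) * ((z \<bullet> w) * (z \<bullet> w)))))
    + u2\<^sup>2 * (stdg z * ((z \<bullet> v) * ((z \<bullet> v) * ((z \<bullet> v) * (z \<bullet> v)))))
    + u3\<^sup>2 * (stdg z * ((z \<bullet> z) * (z \<bullet> z)))
    + k1\<^sup>2 * (stdg z * ((z \<bullet> v) * (z \<bullet> v)))
    + k0\<^sup>2 * (stdg z)
    + (2 * u1 * u2) * (stdg z * ((z \<bullet> w) * ((z \<bullet> w) * ((z \<bullet> v) * (z \<bullet> v)))))
    + (2 * u1 * u3) * (stdg z * ((z \<bullet> z) * ((z \<bullet> w) * (z \<bullet> w))))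
    + (2 * u1 * k1) * (stdg z * ((z \<bullet> w) * ((z \<bullet> w) * (z \<bullet> v))))
    + (2 * u1 * k0) * (stdg z * ((z \<bullet> w) * (z \<bullet> w)))
    + (2 * u2 * u3) * (stdg z * ((z \<bullet> z) * ((z \<bullet> v) * (z \<bullet> v))))
    + (2 * u2 * k1) * (stdg z * ((z \<bullet> v) * ((z \<bullet> v) * (z \<bullet> v))))
    + (2 * u2 * k0) * (stdg z * ((z \<bullet> v) * (z \<bullet> v)))
    + (2 * u3 * k1) * (stdg z * ((z \<bullet> z) * (z \<bullet> v)))
    + (2 * u3 * k0) * (stdg z * (z \<bullet> z))
    + (2 * k1 * k0) * (stdg z * (z \<bullet> v))
    = stdg z * (u1 * (z \<bullet> w)\<^sup>2 + u2 * ((z \<bullet> v) + s)\<^sup>2 + u3 * ((z \<bullet> z) + 2 * s * (z \<bullet> v) + s\<^sup>2))\<^sup>2"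
      unfolding k0_def k1_def by (simp add: power2_eq_square algebra_simps)
  next
    show "u1\<^sup>2 * 3 + u2\<^sup>2 * 3 + u3\<^sup>2 * (D * (D + 2)) + k1\<^sup>2 * 1 + k0\<^sup>2 * 1 + (2 * u1 * u2) * 1
     + (2 * u1 * u3) * (D + 2) + (2 * u1 * k1) * 0 + (2 * u1 * k0) * 1 + (2 * u2 * u3) * (D + 2)
     + (2 * u2 * k1) * 0 + (2 * u2 * k0) * 1 + (2 * u3 * k1) * 0 + (2 * u3 * k0) * D + (2 * k1 * k0) * 0
     = Kz (real DIM('a)) u1 u2 u3 s"
      unfolding Kz_def Let_def D_def[symmetric] k0_def[symmetric] k1_def[symmetric] by simp
  qed
qed

lemma outer_mulv: "outer u w *v x = (w \<bullet> x) *\<^sub>R u"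
  by (simp add: vec_eq_iff outer_def matrix_vector_mult_def inner_vec_def sum_distrib_left mult_ac)

lemma mat_add_mulv: "((A::real^'n^'m) + B) *v x = A *v x + B *v x"
  by (simp add: vec_eq_iff matrix_vector_mult_def sum.distrib algebra_simps)

lemma mat_diff_mulv: "((A::real^'n^'m) - B) *v x = A *v x - B *v x"
  by (simp add: vec_eq_iff matrix_vector_mult_def sum_subtractf algebra_simps)

lemma mat_scale_mulv: "((c::real) *\<^sub>R (A::real^'n^'m)) *v x = c *\<^sub>R (A *v x)"
  by (simp add: vec_eq_iff matrix_vector_mult_def sum_distrib_left algebra_simps)

lemma Q_inv:
  fixes v :: "real^'n"
  assumes lam: "lam > 0" and vv: "v \<bullet> v = 1"
  shows "matrix_inv (mat 1 + lam *\<^sub>R outer v v) = mat 1 - (lam / (1 + lam)) *\<^sub>R outer v v"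
proof -
  define Q where "Q = mat 1 + lam *\<^sub>R outer v v"
  define B where "B = mat 1 - (lam / (1 + lam)) *\<^sub>R outer v v"
  have QB: "Q ** B = mat 1"
  proof (rule iffD2[OF matrix_eq], rule allI)
    fix x :: "real^'n"
    have "(Q ** B) *v x = Q *v (B *v x)" by (simp add: matrix_vector_mul_assoc)
    also have "\<dots> = x + (lam - lam / (1 + lam) - lam * (lam / (1 + lam))) *\<^sub>R ((v \<bullet> x) *\<^sub>R v)"
      unfolding Q_def B_def
      by (simp add: mat_add_mulv mat_diff_mulv mat_scale_mulv outer_mulv inner_diff_right vv
          algebra_simps scaleR_diff_left)
    also have "lam - lam / (1 + lam) - lam * (lam / (1 + lam)) = 0"
      using lam by (simp add: field_simps)
    finally show "(Q ** B) *v x = mat 1 *v x" by simp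
  qed
  have BQ: "B ** Q = mat 1"
  proof (rule iffD2[OF matrix_eq], rule allI)
    fix x :: "real^'n"
    have "(B ** Q) *v x = B *v (Q *v x)" by (simp add: matrix_vector_mul_assoc)
    also have "\<dots> = x + (lam - lam / (1 + lam) - lam * (lam / (1 + lam))) *\<^sub>R ((v \<bullet> x) *\<^sub>R v)"
      unfolding Q_def B_def
      by (simp add: mat_add_mulv mat_diff_mulv mat_scale_mulv outer_mulv inner_add_right vv
          algebra_simps scaleR_diff_left)
    also have "lam - lam / (1 + lam) - lam * (lam / (1 + lam)) = 0"
      using lam by (simp add: field_simps)
    finally show "(B ** Q) *v x = mat 1 *v x" by simp
  qed
  have "matrix_inv Q = B"
  proof -
    have ex: "\<exists>A'. Q ** A' = mat 1 \<and> A' ** Q = mat 1" using QB BQ by blast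
    have "Q ** matrix_inv Q = mat 1 \<and> matrix_inv Q ** Q = mat 1"
      unfolding matrix_inv_def by (rule someI_ex[OF ex])
    then have "matrix_inv Q = matrix_inv Q ** (Q ** B)" using QB by simp
    also have "\<dots> = (matrix_inv Q ** Q) ** B" by (simp add: matrix_mul_assoc)
    also have "\<dots> = B" using \<open>_ \<and> _\<close> by simp
    finally show ?thesis .
  qed
  then show ?thesis by (simp add: Q_def B_def)
qed



lemma diag_det:
  fixes k :: "'n::finite"
  shows "det (mat 1 + lam *\<^sub>R outer (axis k 1) (axis k 1) :: real^'n^'n) = 1 + lam"
proof -
  have "det (mat 1 + lam *\<^sub>R outer (axis k 1) (axis k 1) :: real^'n^'n)
     = (\<Prod>i\<in>UNIV. (mat 1 + lam *\<^sub>R outer (axis k 1) (axis k 1) :: real^'n^'n) $ i $ i)"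
    by (rule det_diagonal) (auto simp: mat_def outer_def axis_def)
  also have "\<dots> = (\<Prod>i\<in>UNIV. if i = k then 1 + lam else 1)"
    by (intro prod.cong refl) (simp add: mat_def outer_def axis_def)
  also have "\<dots> = 1 + lam" by simp
  finally show ?thesis .
qed

lemma Q_det:
  fixes v :: "real^'n"
  assumes vn: "norm v = 1"
  shows "det (mat 1 + lam *\<^sub>R outer v v) = 1 + lam"
proof -
  fix k :: 'n
  obtain A where A: "orthogonal_matrix A" "A *v axis k 1 = v"
    using orthogonal_matrix_exists_basis[OF vn] by blast
  define e :: "real^'n" where "e = axis k 1"
  have tAA: "transpose A ** A = mat 1" using A(1) by (simp add: orthogonal_matrix_def)
  have tAv: "transpose A *v v = e"
    unfolding e_def A(2)[symmetric] matrix_vector_mul_assoc tAA by simp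
  have ve: "v \<bullet> (A *v x) = e \<bullet> x" for x
  proof -
    have "v \<bullet> (A *v x) = (v v* A) \<bullet> x" by (simp add: dot_lmul_matrix)
    also have "v v* A = transpose A *v v" by (metis vector_transpose_matrix transpose_transpose)
    finally show ?thesis using tAv by simp
  qed
  have eq: "transpose A ** (mat 1 + lam *\<^sub>R outer v v) ** A = mat 1 + lam *\<^sub>R outer e e"
  proof (rule iffD2[OF matrix_eq], rule allI)
    fix x :: "real^'n"
    have "(transpose A ** (mat 1 + lam *\<^sub>R outer v v) ** A) *v x
        = transpose A *v ((mat 1 + lam *\<^sub>R outer v v) *v (A *v x))"
      by (simp only: matrix_vector_mul_assoc matrix_mul_assoc)
    also have "\<dots> = transpose A *v (A *v x) + (lam * (v \<bullet> (A *v x))) *\<^sub>R (transpose A *v v)"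
      by (simp only: mat_add_mulv mat_scale_mulv outer_mulv matrix_vector_mul_lid
          matrix_vector_right_distrib matrix_vector_mult_scaleR scaleR_scaleR)
    also have "\<dots> = x + (lam * (e \<bullet> x)) *\<^sub>R e"
      by (simp only: ve tAv matrix_vector_mul_assoc tAA matrix_vector_mul_lid)
    also have "\<dots> = (mat 1 + lam *\<^sub>R outer e e) *v x"
      by (simp only: mat_add_mulv mat_scale_mulv outer_mulv matrix_vector_mul_lid scaleR_scaleR)
    finally show "(transpose A ** (mat 1 + lam *\<^sub>R outer v v) ** A) *v x = (mat 1 + lam *\<^sub>R outer e e) *v x" .
  qed
  have "det (transpose A ** (mat 1 + lam *\<^sub>R outer v v) ** A) = det A * det A * det (mat 1 + lam *\<^sub>R outer v v)"
    by (simp only: det_mul det_transpose mult_ac)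
  moreover have "det A * det A = 1"
    using det_orthogonal_matrix[OF A(1)] by auto
  ultimately show ?thesis using eq diag_det[where k=k and lam=lam] by (simp add: e_def)
qed

lemma stdg_eq: "stdg (y::'a::euclidean_space) = exp (- (y \<bullet> y) / 2) / sqrt (2 * pi) ^ DIM('a)"
proof -
  have "stdg y = (\<Prod>b\<in>Basis. exp (- (y \<bullet> b)\<^sup>2 / 2)) / (\<Prod>b\<in>(Basis::'a set). sqrt (2 * pi))"
    by (simp add: stdg_def normal_density_def prod_dividef)
  also have "(\<Prod>b\<in>Basis. exp (- (y \<bullet> b)\<^sup>2 / 2)) = exp (\<Sum>b\<in>Basis. - (y \<bullet> b)\<^sup>2 / 2)"
    by (simp add: exp_sum)
  also have "(\<Sum>b\<in>Basis. - (y \<bullet> b)\<^sup>2 / 2) = - (y \<bullet> y) / 2"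
    by (simp add: euclidean_inner[of y y] sum_negf sum_divide_distrib power2_eq_square)
  finally show ?thesis by simp
qed

lemma stdg_shift:
  fixes x v :: "'a::euclidean_space"
  assumes vv: "v \<bullet> v = 1"
  shows "stdg (x - s *\<^sub>R v) = exp (- (x \<bullet> x - (x \<bullet> v)\<^sup>2) / 2) / sqrt (2 * pi) ^ (DIM('a) - 1)
      * std_normal_density ((x \<bullet> v) - s)"
proof -
  have D: "sqrt (2 * pi) ^ DIM('a) = sqrt (2 * pi) ^ (DIM('a) - 1) * sqrt (2 * pi)"
    by (metis DIM_positive Suc_diff_1 mult.commute power_Suc)
  have e: "- ((x - s *\<^sub>R v) \<bullet> (x - s *\<^sub>R v)) / 2 = - (x \<bullet> x - (x \<bullet> v)\<^sup>2) / 2 + - ((x \<bullet> v) - s)\<^sup>2 / 2"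
    by (simp add: inner_diff_left inner_diff_right vv inner_commute power2_eq_square field_simps)
  show ?thesis
    unfolding stdg_eq D e exp_add
    by (simp add: normal_density_def)
qed

lemma dens_conv:
  fixes x v :: "'a::euclidean_space"
  assumes vv: "v \<bullet> v = 1" and lam: "lam > 0"
  shows "(\<integral>\<^sup>+ s. ennreal (stdg (x - s *\<^sub>R v) * normal_density 0 (sqrt lam) s) \<partial>lborel)
     = ennreal (exp (- (x \<bullet> x - (lam / (1 + lam)) * (x \<bullet> v)\<^sup>2) / 2) / sqrt ((2 * pi) ^ DIM('a) * (1 + lam)))"
proof -
  define C where "C = exp (- (x \<bullet> x - (x \<bullet> v)\<^sup>2) / 2) / sqrt (2 * pi) ^ (DIM('a) - 1)"
  have C0: "C \<ge> 0" by (simp add: C_def)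
  have "(\<integral>\<^sup>+ s. ennreal (stdg (x - s *\<^sub>R v) * normal_density 0 (sqrt lam) s) \<partial>lborel)
      = (\<integral>\<^sup>+ s. ennreal C * ennreal (normal_density 0 1 ((x \<bullet> v) - s) * normal_density 0 (sqrt lam) s) \<partial>lborel)"
    by (intro nn_integral_cong) (simp add: stdg_shift[OF vv] C_def ennreal_mult'[symmetric] mult.assoc)
  also have "\<dots> = ennreal C * (\<integral>\<^sup>+ s. ennreal (normal_density 0 1 ((x \<bullet> v) - s) * normal_density 0 (sqrt lam) s) \<partial>lborel)"
    by (rule nn_integral_cmult) simp
  also have "(\<integral>\<^sup>+ s. ennreal (normal_density 0 1 ((x \<bullet> v) - s) * normal_density 0 (sqrt lam) s) \<partial>lborel)
      = ennreal (normal_density 0 (sqrt (1 + lam)) (x \<bullet> v))"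
    using fun_cong[OF conv_normal_density_zero_mean[of 1 "sqrt lam"], of "x \<bullet> v"] lam by simp
  also have "ennreal C * ennreal (normal_density 0 (sqrt (1 + lam)) (x \<bullet> v))
      = ennreal (C * normal_density 0 (sqrt (1 + lam)) (x \<bullet> v))"
    using C0 by (simp add: ennreal_mult')
  also have "C * normal_density 0 (sqrt (1 + lam)) (x \<bullet> v)
      = exp (- (x \<bullet> x - (lam / (1 + lam)) * (x \<bullet> v)\<^sup>2) / 2) / sqrt ((2 * pi) ^ DIM('a) * (1 + lam))"
  proof -
    have D: "sqrt ((2 * pi) ^ DIM('a) * (1 + lam)) = sqrt (2 * pi) ^ (DIM('a) - 1) * sqrt (2 * pi * (1 + lam))"
      by (metis DIM_positive Suc_diff_1 mult.assoc mult.commute power_Suc real_sqrt_mult real_sqrt_power)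
    have e: "- (x \<bullet> x - (lam / (1 + lam)) * (x \<bullet> v)\<^sup>2) / 2
       = - (x \<bullet> x - (x \<bullet> v)\<^sup>2) / 2 + - ((x \<bullet> v) - 0)\<^sup>2 / (2 * (sqrt (1 + lam))\<^sup>2)"
      using lam by (simp add: field_simps)
    show ?thesis unfolding D e exp_add C_def normal_density_def
      using lam by (simp add: field_simps)
  qed
  finally show ?thesis .
qed

lemma stdg_fun: "stdg = (\<lambda>y::'a::euclidean_space. exp (- (y \<bullet> y) / 2) / sqrt (2 * pi) ^ DIM('a))"
  by (rule ext) (rule stdg_eq)

lemma stdg_measurable[measurable]: "stdg \<in> borel_measurable (borel :: 'a::euclidean_space measure)"
  unfolding stdg_fun by measurable

lemma stdg_nonneg: "stdg y \<ge> 0"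
  by (simp add: stdg_eq)

lemma gauss_nn:
  fixes v :: "'a::euclidean_space" and f :: "'a \<Rightarrow> real"
  assumes vv: "v \<bullet> v = 1" and lam: "lam > 0"
    and fm[measurable]: "f \<in> borel_measurable borel" and f0: "\<And>x. f x \<ge> 0"
  shows "(\<integral>\<^sup>+ x. ennreal (exp (- (x \<bullet> x - (lam / (1 + lam)) * (x \<bullet> v)\<^sup>2) / 2) / sqrt ((2 * pi) ^ DIM('a) * (1 + lam)) * f x) \<partial>lborel)
    = (\<integral>\<^sup>+ s. ennreal (normal_density 0 (sqrt lam) s) * (\<integral>\<^sup>+ z. ennreal (stdg z * f (z + s *\<^sub>R v)) \<partial>lborel) \<partial>lborel)"
proof -
  let ?nd = "normal_density 0 (sqrt lam)"
  have "(\<integral>\<^sup>+ x. ennreal (exp (- (x \<bullet> x - (lam / (1 + lam)) * (x \<bullet> v)\<^sup>2) / 2) / sqrt ((2 * pi) ^ DIM('a) * (1 + lam)) * f x) \<partial>lborel)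
      = (\<integral>\<^sup>+ x. (\<integral>\<^sup>+ s. ennreal (stdg (x - s *\<^sub>R v) * ?nd s) \<partial>lborel) * ennreal (f x) \<partial>lborel)"
    by (intro nn_integral_cong, subst dens_conv[OF vv lam]) (rule ennreal_mult''[OF f0])
  also have "\<dots> = (\<integral>\<^sup>+ x. (\<integral>\<^sup>+ s. ennreal (stdg (x - s *\<^sub>R v) * ?nd s * f x) \<partial>lborel) \<partial>lborel)"
    by (intro nn_integral_cong, subst nn_integral_multc[symmetric])
       (auto simp: ennreal_mult'' f0 intro!: nn_integral_cong)
  also have "\<dots> = (\<integral>\<^sup>+ s. (\<integral>\<^sup>+ x. ennreal (stdg (x - s *\<^sub>R v) * ?nd s * f x) \<partial>lborel) \<partial>lborel)"
  proof -
    have m: "(\<lambda>(x::'a, s::real). ennreal (stdg (x - s *\<^sub>R v) * ?nd s * f x)) \<in> borel_measurable (lborel \<Otimes>\<^sub>M lborel)"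
      by measurable
    show ?thesis using lborel_pair.Fubini'[OF m] by simp
  qed
  also have "\<dots> = (\<integral>\<^sup>+ s. ennreal (?nd s) * (\<integral>\<^sup>+ z. ennreal (stdg z * f (z + s *\<^sub>R v)) \<partial>lborel) \<partial>lborel)"
  proof (intro nn_integral_cong)
    fix s :: real
    have "(\<integral>\<^sup>+ x. ennreal (stdg (x - s *\<^sub>R v) * ?nd s * f x) \<partial>lborel)
        = (\<integral>\<^sup>+ x. ennreal (?nd s) * ennreal (stdg (x - s *\<^sub>R v) * f x) \<partial>lborel)"
      by (intro nn_integral_cong) (simp add: ennreal_mult'[symmetric] stdg_nonneg f0 mult_ac)
    also have "\<dots> = ennreal (?nd s) * (\<integral>\<^sup>+ x. ennreal (stdg (x - s *\<^sub>R v) * f x) \<partial>lborel)"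
      by (rule nn_integral_cmult) measurable
    also have "(\<integral>\<^sup>+ x. ennreal (stdg (x - s *\<^sub>R v) * f x) \<partial>lborel)
        = (\<integral>\<^sup>+ x. ennreal (stdg (x - s *\<^sub>R v) * f x) \<partial>distr lborel borel ((+) (s *\<^sub>R v)))"
      by (simp add: lborel_distr_plus)
    also have "\<dots> = (\<integral>\<^sup>+ z. ennreal (stdg z * f (z + s *\<^sub>R v)) \<partial>lborel)"
      by (subst nn_integral_distr) (auto simp: add.commute)
    finally show "(\<integral>\<^sup>+ x. ennreal (stdg (x - s *\<^sub>R v) * ?nd s * f x) \<partial>lborel)
        = ennreal (?nd s) * (\<integral>\<^sup>+ z. ennreal (stdg z * f (z + s *\<^sub>R v)) \<partial>lborel)" .
  qed
  finally show ?thesis .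
qed

lemma hb_nn: "has_bochner_integral M f x \<Longrightarrow> (\<And>y. 0 \<le> f y) \<Longrightarrow> (\<integral>\<^sup>+ y. ennreal (f y) \<partial>M) = ennreal x"
  by (metis (mono_tags, lifting) AE_I2 has_bochner_integral_iff nn_integral_eq_integral)

lemma noise_integral:
  assumes sig: "\<sigma> > 0"
  shows "(\<integral>\<nu>. ((a + \<nu>) - b)\<^sup>2 \<partial>(density lborel (normal_density 0 \<sigma>))) = (a - b)\<^sup>2 + \<sigma>\<^sup>2"
proof -
  have h1: "has_bochner_integral lborel (\<lambda>\<nu>. normal_density 0 \<sigma> \<nu> * \<nu>) 0"
    using normal_moment_odd[where \<mu>=0 and \<sigma>=\<sigma> and k=0] sig by (simp only: diff_zero mult_0_right add_0_left power_one_right)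
  have h2: "has_bochner_integral lborel (\<lambda>\<nu>. normal_density 0 \<sigma> \<nu> * \<nu>\<^sup>2) (\<sigma>\<^sup>2)"
    using normal_moment_even[where \<mu>=0 and \<sigma>=\<sigma> and k=1] sig by simp
  have h0: "has_bochner_integral lborel (\<lambda>\<nu>. normal_density 0 \<sigma> \<nu>) 1"
    using has_bochner_integral_integrable[OF integrable_normal_density[where \<mu>=0 and \<sigma>=\<sigma>]]
      integral_normal_density[where \<mu>=0 and \<sigma>=\<sigma>] sig by simp
  have "has_bochner_integral lborel (\<lambda>\<nu>. (a - b)\<^sup>2 * normal_density 0 \<sigma> \<nu> + (2 * (a - b)) * (normal_density 0 \<sigma> \<nu> * \<nu>)
      + normal_density 0 \<sigma> \<nu> * \<nu>\<^sup>2) ((a - b)\<^sup>2 * 1 + (2 * (a - b)) * 0 + \<sigma>\<^sup>2)"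
    by (intro has_bochner_integral_add has_bochner_integral_mult_right h0 h1 h2)
  then have "has_bochner_integral lborel (\<lambda>\<nu>. normal_density 0 \<sigma> \<nu> *\<^sub>R ((a + \<nu>) - b)\<^sup>2) ((a - b)\<^sup>2 + \<sigma>\<^sup>2)"
    by (rule has_bochner_integral_cong[THEN iffD1, rotated 3]) (auto simp: power2_eq_square algebra_simps)
  then show ?thesis
    by (subst integral_density) (auto simp: has_bochner_integral_iff)
qed

lemma s_moments:
  assumes lam: "lam > 0"
  shows "has_bochner_integral lborel (\<lambda>s. normal_density 0 (sqrt lam) s * (a0 + a2 * s\<^sup>2 + a4 * s ^ 4))
     (a0 + a2 * lam + a4 * (3 * lam\<^sup>2))"
proof -
  have h0: "has_bochner_integral lborel (\<lambda>s. normal_density 0 (sqrt lam) s) 1"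
    using has_bochner_integral_integrable[OF integrable_normal_density[where \<mu>=0 and \<sigma>="sqrt lam"]]
      integral_normal_density[where \<mu>=0 and \<sigma>="sqrt lam"] lam by simp
  have h2: "has_bochner_integral lborel (\<lambda>s. normal_density 0 (sqrt lam) s * s\<^sup>2) lam"
    using normal_moment_even[where \<mu>=0 and \<sigma>="sqrt lam" and k=1] lam by simp
  have h4: "has_bochner_integral lborel (\<lambda>s. normal_density 0 (sqrt lam) s * s ^ 4) (3 * lam\<^sup>2)"
    using normal_moment_even[where \<mu>=0 and \<sigma>="sqrt lam" and k=2] lam by (simp add: fact_numeral power2_eq_square)
  have "has_bochner_integral lborel (\<lambda>s. a0 * normal_density 0 (sqrt lam) s + a2 * (normal_density 0 (sqrt lam) s * s\<^sup>2)
     + a4 * (normal_density 0 (sqrt lam) s * s ^ 4)) (a0 * 1 + a2 * lam + a4 * (3 * lam\<^sup>2))"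
    by (intro has_bochner_integral_add has_bochner_integral_mult_right h0 h2 h4)
  then show ?thesis
    by (rule has_bochner_integral_cong[THEN iffD1, rotated 3]) (auto simp: algebra_simps)
qed

lemma Kz_poly: "Kz D u1 u2 u3 s = (3 * u1\<^sup>2 + 3 * u2\<^sup>2 + u3\<^sup>2 * (D * (D + 2)) + 2 * u1 * u2 + 2 * u1 * u3 * (D + 2)
   + 2 * u2 * u3 * (D + 2)) + (4 * (u2 + u3)\<^sup>2 + 2 * (u2 + u3) * (u1 + u2 + u3 * D)) * s\<^sup>2 + (u2 + u3)\<^sup>2 * s ^ 4"
  unfolding Kz_def Let_def by (simp add: power2_eq_square power4_eq_xxxx algebra_simps)

lemma gauss_quartic:
  fixes ws v :: "'a::euclidean_space"
  assumes ww: "ws \<bullet> ws = 1" and vv: "v \<bullet> v = 1" and wv: "ws \<bullet> v = 0" and lam: "lam > 0"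
  shows "(\<integral>\<^sup>+ x. ennreal (exp (- (x \<bullet> x - (lam / (1 + lam)) * (x \<bullet> v)\<^sup>2) / 2) / sqrt ((2 * pi) ^ DIM('a) * (1 + lam))
            * ((u1 * (x \<bullet> ws)\<^sup>2 + u2 * (x \<bullet> v)\<^sup>2 + u3 * (x \<bullet> x))\<^sup>2 + \<sigma>\<^sup>2)) \<partial>lborel)
    = ennreal ((3 * u1\<^sup>2 + 3 * u2\<^sup>2 + u3\<^sup>2 * (real DIM('a) * (real DIM('a) + 2)) + 2 * u1 * u2 + 2 * u1 * u3 * (real DIM('a) + 2)
   + 2 * u2 * u3 * (real DIM('a) + 2) + \<sigma>\<^sup>2) + (4 * (u2 + u3)\<^sup>2 + 2 * (u2 + u3) * (u1 + u2 + u3 * real DIM('a))) * lam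
   + (u2 + u3)\<^sup>2 * (3 * lam\<^sup>2))"
proof -
  define f where "f x = (u1 * (x \<bullet> ws)\<^sup>2 + u2 * (x \<bullet> v)\<^sup>2 + u3 * (x \<bullet> x))\<^sup>2 + \<sigma>\<^sup>2" for x :: 'a
  have fm[measurable]: "f \<in> borel_measurable borel" unfolding f_def[abs_def] by measurable
  have f0: "f x \<ge> 0" for x by (simp add: f_def)
  let ?D = "real DIM('a)"
  have inner: "(\<integral>\<^sup>+ z. ennreal (stdg z * f (z + s *\<^sub>R v)) \<partial>lborel) = ennreal (Kz ?D u1 u2 u3 s + \<sigma>\<^sup>2)" for s
  proof -
    have vw: "v \<bullet> ws = 0" using wv by (simp add: inner_commute)
    have "has_bochner_integral lborel
      (\<lambda>z. stdg z * (u1 * (z \<bullet> ws)\<^sup>2 + u2 * ((z \<bullet> v) + s)\<^sup>2 + u3 * ((z \<bullet> z) + 2 * s * (z \<bullet> v) + s\<^sup>2))\<^sup>2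
         + \<sigma>\<^sup>2 * stdg z) (Kz ?D u1 u2 u3 s + \<sigma>\<^sup>2 * 1)"
      by (intro has_bochner_integral_add has_bochner_integral_mult_right zmom[OF ww vv wv] iss0)
    then have "has_bochner_integral lborel (\<lambda>z. stdg z * f (z + s *\<^sub>R v)) (Kz ?D u1 u2 u3 s + \<sigma>\<^sup>2)"
      by (rule has_bochner_integral_cong[THEN iffD1, rotated 3])
         (auto simp: f_def inner_add_left inner_add_right vw vv inner_commute algebra_simps power2_eq_square)
    then show ?thesis by (rule hb_nn) (simp add: stdg_nonneg f0)
  qed
  have "(\<integral>\<^sup>+ x. ennreal (exp (- (x \<bullet> x - (lam / (1 + lam)) * (x \<bullet> v)\<^sup>2) / 2) / sqrt ((2 * pi) ^ DIM('a) * (1 + lam)) * f x) \<partial>lborel)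
     = (\<integral>\<^sup>+ s. ennreal (normal_density 0 (sqrt lam) s) * ennreal (Kz ?D u1 u2 u3 s + \<sigma>\<^sup>2) \<partial>lborel)"
    by (subst gauss_nn[OF vv lam fm f0]) (simp add: inner)
  also have "\<dots> = (\<integral>\<^sup>+ s. ennreal (normal_density 0 (sqrt lam) s * (Kz ?D u1 u2 u3 s + \<sigma>\<^sup>2)) \<partial>lborel)"
    by (intro nn_integral_cong) (simp add: ennreal_mult')
  also have "\<dots> = ennreal ((3 * u1\<^sup>2 + 3 * u2\<^sup>2 + u3\<^sup>2 * (?D * (?D + 2)) + 2 * u1 * u2 + 2 * u1 * u3 * (?D + 2)
   + 2 * u2 * u3 * (?D + 2) + \<sigma>\<^sup>2) + (4 * (u2 + u3)\<^sup>2 + 2 * (u2 + u3) * (u1 + u2 + u3 * ?D)) * lam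
   + (u2 + u3)\<^sup>2 * (3 * lam\<^sup>2))"
  proof (rule hb_nn)
    show "has_bochner_integral lborel (\<lambda>s. normal_density 0 (sqrt lam) s * (Kz ?D u1 u2 u3 s + \<sigma>\<^sup>2))
      ((3 * u1\<^sup>2 + 3 * u2\<^sup>2 + u3\<^sup>2 * (?D * (?D + 2)) + 2 * u1 * u2 + 2 * u1 * u3 * (?D + 2)
       + 2 * u2 * u3 * (?D + 2) + \<sigma>\<^sup>2) + (4 * (u2 + u3)\<^sup>2 + 2 * (u2 + u3) * (u1 + u2 + u3 * ?D)) * lam
       + (u2 + u3)\<^sup>2 * (3 * lam\<^sup>2))"
      using s_moments[OF lam, of "3 * u1\<^sup>2 + 3 * u2\<^sup>2 + u3\<^sup>2 * (?D * (?D + 2)) + 2 * u1 * u2 + 2 * u1 * u3 * (?D + 2)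
       + 2 * u2 * u3 * (?D + 2) + \<sigma>\<^sup>2" "4 * (u2 + u3)\<^sup>2 + 2 * (u2 + u3) * (u1 + u2 + u3 * ?D)" "(u2 + u3)\<^sup>2"]
      by (simp add: Kz_poly algebra_simps)
    show "0 \<le> normal_density 0 (sqrt lam) s * (Kz ?D u1 u2 u3 s + \<sigma>\<^sup>2)" for s
    proof -
      have hz: "has_bochner_integral lborel
        (\<lambda>z. stdg z * (u1 * (z \<bullet> ws)\<^sup>2 + u2 * ((z \<bullet> v) + s)\<^sup>2 + u3 * ((z \<bullet> z) + 2 * s * (z \<bullet> v) + s\<^sup>2))\<^sup>2)
        (Kz ?D u1 u2 u3 s)" by (rule zmom[OF ww vv wv])
      have "0 \<le> integral\<^sup>L lborel
        (\<lambda>z. stdg z * (u1 * (z \<bullet> ws)\<^sup>2 + u2 * ((z \<bullet> v) + s)\<^sup>2 + u3 * ((z \<bullet> z) + 2 * s * (z \<bullet> v) + s\<^sup>2))\<^sup>2)"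
        by (intro integral_nonneg_AE AE_I2) (simp add: stdg_nonneg)
      then have "Kz ?D u1 u2 u3 s \<ge> 0" using hz by (simp add: has_bochner_integral_iff)
      then show ?thesis by simp
    qed
  qed
  finally show ?thesis by (simp add: f_def)
qed

lemma sum_mulv: "(sum f S :: real^'n^'m) *v y = (\<Sum>j\<in>S. f j *v y)"
  by (induction S rule: infinite_finite_induct) (simp_all add: vec_eq_iff matrix_vector_mult_def sum.distrib algebra_simps)

lemma outer_mulv': "outer u w *v x = (w \<bullet> x) *\<^sub>R u"
  by (simp add: vec_eq_iff outer_def matrix_vector_mult_def inner_vec_def sum_distrib_left mult_ac)

lemma qf_from_ansatz:
  fixes W :: "real^'d^'d" and ws v y :: "real^'d"
  assumes "(\<Sum>j\<in>UNIV. outer (W $ j) (W $ j)) =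
         a *\<^sub>R outer ws ws + b *\<^sub>R outer v v + c *\<^sub>R (mat 1 - outer ws ws - outer v v)"
  shows "(\<Sum>j\<in>UNIV. (W $ j \<bullet> y)\<^sup>2) = a * (y \<bullet> ws)\<^sup>2 + b * (y \<bullet> v)\<^sup>2 + c * (y \<bullet> y - (y \<bullet> ws)\<^sup>2 - (y \<bullet> v)\<^sup>2)"
proof -
  have mv: "((A::real^'d^'d) + B) *v x = A *v x + B *v x" "(A - B) *v x = A *v x - B *v x"
     "((r::real) *\<^sub>R A) *v x = r *\<^sub>R (A *v x)" for A B x r
    by (simp_all add: vec_eq_iff matrix_vector_mult_def sum.distrib sum_subtractf sum_distrib_left algebra_simps)
  have "y \<bullet> ((\<Sum>j\<in>UNIV. outer (W $ j) (W $ j)) *v y) = (\<Sum>j\<in>UNIV. (W $ j \<bullet> y)\<^sup>2)"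
    by (simp add: sum_mulv outer_mulv' inner_sum_right power2_eq_square inner_commute)
  moreover have "y \<bullet> ((a *\<^sub>R outer ws ws + b *\<^sub>R outer v v + c *\<^sub>R (mat 1 - outer ws ws - outer v v)) *v y)
     = a * (y \<bullet> ws)\<^sup>2 + b * (y \<bullet> v)\<^sup>2 + c * (y \<bullet> y - (y \<bullet> ws)\<^sup>2 - (y \<bullet> v)\<^sup>2)"
    by (simp add: mv outer_mulv' inner_add_right inner_diff_right power2_eq_square inner_commute algebra_simps)
  ultimately show ?thesis using assms by simp
qed

lemma comp_deriv:
  fixes W G :: "real \<Rightarrow> real^'d^'d"
  assumes "(W has_vector_derivative (- G t)) (at t within S)"
  shows "((\<lambda>t'. (W t' $ j \<bullet> u)\<^sup>2) has_real_derivative (2 * (W t $ j \<bullet> u) * (- (G t $ j \<bullet> u)))) (at t within S)"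
proof -
  have bl: "bounded_linear (\<lambda>M::real^'d^'d. M $ j \<bullet> u)"
    by (intro bounded_linear_inner_left_comp bounded_linear_vec_nth) 
  have "((\<lambda>t'. W t' $ j \<bullet> u) has_vector_derivative (- G t $ j \<bullet> u)) (at t within S)"
    using bounded_linear.has_vector_derivative[OF bl assms] by simp
  then have d1: "((\<lambda>t'. W t' $ j \<bullet> u) has_real_derivative (- (G t $ j \<bullet> u))) (at t within S)"
    by (simp add: has_real_derivative_iff_has_vector_derivative)
  show ?thesis
    using DERIV_power[OF d1, of 2] by (simp add: power2_eq_square mult_ac)
qed

definition Fpl :: "real \<Rightarrow> real \<Rightarrow> real \<Rightarrow> real \<Rightarrow> real \<Rightarrow> real \<Rightarrow> real" where
  "Fpl lam \<sigma> d \<alpha> \<beta> \<gamma> = \<sigma>\<^sup>2 + (\<alpha> + (1 + lam) * \<beta> + (d - 2) * \<gamma> - 1)\<^sup>2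
     + 2 * ((\<alpha> - 1)\<^sup>2 + (1 + lam)\<^sup>2 * \<beta>\<^sup>2 + (d - 2) * \<gamma>\<^sup>2)"

lemma pop_loss_family:
  fixes ws v :: "real^'d" and W' :: "real^'d^'d"
  assumes d2: "CARD('d) \<ge> 2" and lam: "lam > 0" and sig: "\<sigma> > 0"
    and ws_unit: "norm ws = 1" and v_unit: "norm v = 1" and orth: "v \<bullet> ws = 0"
    and qf: "\<And>x. (\<Sum>j\<in>UNIV. (W' $ j \<bullet> x)\<^sup>2) = \<alpha> * (x \<bullet> ws)\<^sup>2 + \<beta> * (x \<bullet> v)\<^sup>2 + \<gamma> * (x \<bullet> x - (x \<bullet> ws)\<^sup>2 - (x \<bullet> v)\<^sup>2)"
  shows "pop_loss (mat 1 + lam *\<^sub>R outer v v) ws \<sigma> W' = Fpl lam \<sigma> (real CARD('d)) \<alpha> \<beta> \<gamma>"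
proof -
  have ww: "ws \<bullet> ws = 1" using ws_unit by (simp add: norm_eq_1)
  have vv: "v \<bullet> v = 1" using v_unit by (simp add: norm_eq_1)
  have wv: "ws \<bullet> v = 0" using orth by (simp add: inner_commute)
  define Gd where "Gd x = exp (- (x \<bullet> x - (lam / (1 + lam)) * (x \<bullet> v)\<^sup>2) / 2) / sqrt ((2 * pi) ^ DIM(real^'d) * (1 + lam))" for x :: "real^'d"
  define u1 where "u1 = 1 - \<alpha> + \<gamma>"
  define u2 where "u2 = \<gamma> - \<beta>"
  define u3 where "u3 = - \<gamma>"
  define h where "h x = (u1 * (x \<bullet> ws)\<^sup>2 + u2 * (x \<bullet> v)\<^sup>2 + u3 * (x \<bullet> x))\<^sup>2 + \<sigma>\<^sup>2" for x :: "real^'d"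
  have gd: "gauss_density (mat 1 + lam *\<^sub>R outer v v) x = Gd x" for x
    unfolding gauss_density_def Gd_def Q_inv[OF lam vv] Q_det[OF v_unit]
    by (simp add: mat_diff_mulv mat_scale_mulv outer_mulv inner_diff_right power2_eq_square inner_commute)
  have Gd0: "Gd x \<ge> 0" for x using lam by (simp add: Gd_def)
  have Gdm[measurable]: "Gd \<in> borel_measurable borel" unfolding Gd_def[abs_def] by measurable
  have hm[measurable]: "h \<in> borel_measurable borel" unfolding h_def[abs_def] by measurable
  have h0: "h x \<ge> 0" for x by (simp add: h_def)
  have inner: "(\<integral>\<nu>. (((x \<bullet> ws)\<^sup>2 + \<nu>) - (\<Sum>j\<in>UNIV. (W' $ j \<bullet> x)\<^sup>2))\<^sup>2 \<partial>(density lborel (normal_density 0 \<sigma>))) = h x" for x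
    unfolding noise_integral[OF sig] h_def qf u1_def u2_def u3_def by (simp add: algebra_simps)
  have "pop_loss (mat 1 + lam *\<^sub>R outer v v) ws \<sigma> W' = (\<integral>x. h x \<partial>(density lborel Gd))"
    unfolding pop_loss_def inner gd[abs_def] ..
  also have "\<dots> = enn2real (\<integral>\<^sup>+ x. ennreal (h x) \<partial>(density lborel Gd))"
    by (rule integral_eq_nn_integral) (auto simp: h0)
  also have "(\<integral>\<^sup>+ x. ennreal (h x) \<partial>(density lborel Gd)) = (\<integral>\<^sup>+ x. ennreal (Gd x) * ennreal (h x) \<partial>lborel)"
    by (rule nn_integral_density) auto
  also have "\<dots> = (\<integral>\<^sup>+ x. ennreal (Gd x * h x) \<partial>lborel)"
    by (intro nn_integral_cong) (simp add: ennreal_mult' Gd0)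
  also have "\<dots> = ennreal ((3 * u1\<^sup>2 + 3 * u2\<^sup>2 + u3\<^sup>2 * (real DIM(real^'d) * (real DIM(real^'d) + 2)) + 2 * u1 * u2 + 2 * u1 * u3 * (real DIM(real^'d) + 2)
   + 2 * u2 * u3 * (real DIM(real^'d) + 2) + \<sigma>\<^sup>2) + (4 * (u2 + u3)\<^sup>2 + 2 * (u2 + u3) * (u1 + u2 + u3 * real DIM(real^'d))) * lam
   + (u2 + u3)\<^sup>2 * (3 * lam\<^sup>2))"
    unfolding Gd_def h_def by (rule gauss_quartic[OF ww vv wv lam])
  also have "(3 * u1\<^sup>2 + 3 * u2\<^sup>2 + u3\<^sup>2 * (real DIM(real^'d) * (real DIM(real^'d) + 2)) + 2 * u1 * u2 + 2 * u1 * u3 * (real DIM(real^'d) + 2)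
   + 2 * u2 * u3 * (real DIM(real^'d) + 2) + \<sigma>\<^sup>2) + (4 * (u2 + u3)\<^sup>2 + 2 * (u2 + u3) * (u1 + u2 + u3 * real DIM(real^'d))) * lam
   + (u2 + u3)\<^sup>2 * (3 * lam\<^sup>2) = Fpl lam \<sigma> (real CARD('d)) \<alpha> \<beta> \<gamma>"
    unfolding Fpl_def u1_def u2_def u3_def by (simp add: power2_eq_square algebra_simps)
  also have "Fpl lam \<sigma> (real CARD('d)) \<alpha> \<beta> \<gamma> \<ge> 0"
    using d2 unfolding Fpl_def by (intro add_nonneg_nonneg mult_nonneg_nonneg) auto
  then have "enn2real (ennreal (Fpl lam \<sigma> (real CARD('d)) \<alpha> \<beta> \<gamma>)) = Fpl lam \<sigma> (real CARD('d)) \<alpha> \<beta> \<gamma>" by simp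
  finally show ?thesis .
qed

lemma dir_deriv:
  fixes L :: "real^'d^'d \<Rightarrow> real"
  assumes gr: "(L has_derivative (\<lambda>H. G \<bullet> H)) (at W0)"
    and eq: "\<And>s. L (W0 + s *\<^sub>R H) = \<psi> s"
    and d: "(\<psi> has_real_derivative D) (at 0)"
  shows "G \<bullet> H = D"
proof -
  have lin: "((\<lambda>s::real. W0 + s *\<^sub>R H) has_derivative (\<lambda>h. h *\<^sub>R H)) (at 0)"
    by (auto intro!: derivative_eq_intros)
  have gr': "(L has_derivative (\<lambda>H. G \<bullet> H)) (at (W0 + 0 *\<^sub>R H))" using gr by simp
  have "((\<lambda>s. L (W0 + s *\<^sub>R H)) has_derivative (\<lambda>h. G \<bullet> (h *\<^sub>R H))) (at 0)"
    by (rule has_derivative_compose[OF lin gr'])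
  then have "((\<lambda>s. L (W0 + s *\<^sub>R H)) has_derivative (\<lambda>h. (G \<bullet> H) * h)) (at 0)"
    by (simp add: mult.commute)
  then have "(\<psi> has_real_derivative (G \<bullet> H)) (at 0)"
    unfolding has_field_derivative_def eq[abs_def] .
  then show ?thesis using d by (rule DERIV_unique)
qed

lemma inner_mat_rows: "(G::real^'d^'d) \<bullet> H = (\<Sum>j\<in>UNIV. G $ j \<bullet> H $ j)"
  by (simp add: inner_vec_def)

theorem proposition5p1:
  fixes ws v :: "real^'d"
    and lam \<sigma> :: real
    and W G :: "real \<Rightarrow> real^'d^'d"
    and a b c :: "real \<Rightarrow> real"
  assumes d3: "CARD('d) \<ge> 3"
    and lam: "lam > 0"
    and sig: "\<sigma> > 0"
    and ws_unit: "norm ws = 1"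
    and v_unit: "norm v = 1"
    and orth: "v \<bullet> ws = 0"
    and grad: "\<And>t. t \<ge> 0 \<Longrightarrow>
       (pop_loss (mat 1 + lam *\<^sub>R outer v v) ws \<sigma> has_derivative (\<lambda>H. G t \<bullet> H)) (at (W t))"
    and flow: "\<And>t. t \<ge> 0 \<Longrightarrow> (W has_vector_derivative (- G t)) (at t within {0..})"
    and ansatz: "\<And>t. t \<ge> 0 \<Longrightarrow>
       (\<Sum>j\<in>UNIV. outer (W t $ j) (W t $ j)) =
         a t *\<^sub>R outer ws ws + b t *\<^sub>R outer v v
         + c t *\<^sub>R (mat 1 - outer ws ws - outer v v)"
  shows "\<forall>t\<ge>0.
     (let r = a t + (1 + lam) * b t + (real CARD('d) - 2) * c t;
          g_w = 8 * (a t - 1) + 4 * (r - 1);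
          g_v = 8 * (1 + lam)\<^sup>2 * b t + 4 * (1 + lam) * (r - 1);
          g_p = 8 * c t + 4 * (r - 1)
      in (a has_real_derivative (- 2 * g_w * a t)) (at t within {0..})
       \<and> (b has_real_derivative (- 2 * g_v * b t)) (at t within {0..})
       \<and> (c has_real_derivative (- 2 * g_p * c t)) (at t within {0..}))"
proof (intro allI impI)
  fix t :: real assume t0: "t \<ge> 0"
  have ww: "ws \<bullet> ws = 1" using ws_unit by (simp add: norm_eq_1)
  have vv: "v \<bullet> v = 1" using v_unit by (simp add: norm_eq_1)
  have wv: "ws \<bullet> v = 0" using orth by (simp add: inner_commute)
  define d where "d = real CARD('d)"
  have d3': "d \<ge> 3" using d3 by (simp add: d_def)
  have d2: "CARD('d) \<ge> 2" using d3 by simp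
  have qfW: "(\<Sum>j\<in>UNIV. (W t' $ j \<bullet> y)\<^sup>2) = a t' * (y \<bullet> ws)\<^sup>2 + b t' * (y \<bullet> v)\<^sup>2 + c t' * (y \<bullet> y - (y \<bullet> ws)\<^sup>2 - (y \<bullet> v)\<^sup>2)"
    if "t' \<ge> 0" for t' y
    using qf_from_ansatz[OF ansatz[OF that]] by blast
  define r where "r = a t + (1 + lam) * b t + (d - 2) * c t"
  let ?Q = "mat 1 + lam *\<^sub>R outer v v"
  note gr = grad[OF t0]

  define HS :: "real^'d^'d" where "HS = (\<chi> j. (W t $ j \<bullet> ws) *\<^sub>R ws)"
  have DS: "G t \<bullet> HS = 2 * a t * (2 * (r - 1) + 4 * (a t - 1))"
  proof (rule dir_deriv[OF gr])
    show "pop_loss ?Q ws \<sigma> (W t + s *\<^sub>R HS) = Fpl lam \<sigma> d (a t * (1 + s)\<^sup>2) (b t) (c t)" for s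
      unfolding d_def
    proof (rule pop_loss_family[OF d2 lam sig ws_unit v_unit orth])
      fix x :: "real^'d"
      have row: "(W t + s *\<^sub>R HS) $ j \<bullet> x = W t $ j \<bullet> (x + (s * (x \<bullet> ws)) *\<^sub>R ws)" for j
        by (simp add: HS_def inner_add_left inner_add_right inner_commute algebra_simps)
      show "(\<Sum>j\<in>UNIV. ((W t + s *\<^sub>R HS) $ j \<bullet> x)\<^sup>2) = a t * (1 + s)\<^sup>2 * (x \<bullet> ws)\<^sup>2 + b t * (x \<bullet> v)\<^sup>2
          + c t * (x \<bullet> x - (x \<bullet> ws)\<^sup>2 - (x \<bullet> v)\<^sup>2)"
        unfolding row qfW[OF t0]
        by (simp add: inner_add_left inner_add_right ww wv orth inner_commute power2_eq_square algebra_simps)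
    qed
    show "((\<lambda>s. Fpl lam \<sigma> d (a t * (1 + s)\<^sup>2) (b t) (c t)) has_real_derivative
        2 * a t * (2 * (r - 1) + 4 * (a t - 1))) (at 0)"
      unfolding Fpl_def
      by (auto intro!: derivative_eq_intros simp: r_def power2_eq_square algebra_simps)
  qed

  define HV :: "real^'d^'d" where "HV = (\<chi> j. (W t $ j \<bullet> v) *\<^sub>R v)"
  have DV: "G t \<bullet> HV = 2 * b t * (2 * (r - 1) * (1 + lam) + 4 * (1 + lam)\<^sup>2 * b t)"
  proof (rule dir_deriv[OF gr])
    show "pop_loss ?Q ws \<sigma> (W t + s *\<^sub>R HV) = Fpl lam \<sigma> d (a t) (b t * (1 + s)\<^sup>2) (c t)" for s
      unfolding d_def
    proof (rule pop_loss_family[OF d2 lam sig ws_unit v_unit orth])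
      fix x :: "real^'d"
      have row: "(W t + s *\<^sub>R HV) $ j \<bullet> x = W t $ j \<bullet> (x + (s * (x \<bullet> v)) *\<^sub>R v)" for j
        by (simp add: HV_def inner_add_left inner_add_right inner_commute algebra_simps)
      show "(\<Sum>j\<in>UNIV. ((W t + s *\<^sub>R HV) $ j \<bullet> x)\<^sup>2) = a t * (x \<bullet> ws)\<^sup>2 + b t * (1 + s)\<^sup>2 * (x \<bullet> v)\<^sup>2
          + c t * (x \<bullet> x - (x \<bullet> ws)\<^sup>2 - (x \<bullet> v)\<^sup>2)"
        unfolding row qfW[OF t0]
        by (simp add: inner_add_left inner_add_right vv wv orth inner_commute power2_eq_square algebra_simps)
    qed
    show "((\<lambda>s. Fpl lam \<sigma> d (a t) (b t * (1 + s)\<^sup>2) (c t)) has_real_derivative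
        2 * b t * (2 * (r - 1) * (1 + lam) + 4 * (1 + lam)\<^sup>2 * b t)) (at 0)"
      unfolding Fpl_def
      by (auto intro!: derivative_eq_intros simp: r_def power2_eq_square algebra_simps)
  qed

  define HP :: "real^'d^'d" where "HP = (\<chi> j. W t $ j - (W t $ j \<bullet> ws) *\<^sub>R ws - (W t $ j \<bullet> v) *\<^sub>R v)"
  have DP: "G t \<bullet> HP = 2 * c t * (2 * (r - 1) * (d - 2) + 4 * (d - 2) * c t)"
  proof (rule dir_deriv[OF gr])
    show "pop_loss ?Q ws \<sigma> (W t + s *\<^sub>R HP) = Fpl lam \<sigma> d (a t) (b t) (c t * (1 + s)\<^sup>2)" for s
      unfolding d_def
    proof (rule pop_loss_family[OF d2 lam sig ws_unit v_unit orth])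
      fix x :: "real^'d"
      define y where "y = x + s *\<^sub>R (x - (x \<bullet> ws) *\<^sub>R ws - (x \<bullet> v) *\<^sub>R v)"
      have row: "(W t + s *\<^sub>R HP) $ j \<bullet> x = W t $ j \<bullet> y" for j
        by (simp add: HP_def y_def inner_add_left inner_add_right inner_diff_left inner_diff_right
            inner_commute algebra_simps)
      have yws: "y \<bullet> ws = x \<bullet> ws"
        by (simp add: y_def inner_add_left inner_diff_left inner_add_right inner_diff_right ww inner_commute wv orth)
      have yv: "y \<bullet> v = x \<bullet> v"
        by (simp add: y_def inner_add_left inner_diff_left inner_add_right inner_diff_right vv inner_commute wv orth)
      have yy: "y \<bullet> y = x \<bullet> x + (2 * s + s\<^sup>2) * (x \<bullet> x - (x \<bullet> ws)\<^sup>2 - (x \<bullet> v)\<^sup>2)"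
        by (simp add: y_def inner_add_left inner_add_right inner_diff_left inner_diff_right ww vv wv orth
            inner_commute power2_eq_square algebra_simps)
      show "(\<Sum>j\<in>UNIV. ((W t + s *\<^sub>R HP) $ j \<bullet> x)\<^sup>2) = a t * (x \<bullet> ws)\<^sup>2 + b t * (x \<bullet> v)\<^sup>2
          + c t * (1 + s)\<^sup>2 * (x \<bullet> x - (x \<bullet> ws)\<^sup>2 - (x \<bullet> v)\<^sup>2)"
        unfolding row qfW[OF t0] yws yv yy
        by (simp add: power2_eq_square algebra_simps)
    qed
    show "((\<lambda>s. Fpl lam \<sigma> d (a t) (b t) (c t * (1 + s)\<^sup>2)) has_real_derivative
        2 * c t * (2 * (r - 1) * (d - 2) + 4 * (d - 2) * c t)) (at 0)"
      unfolding Fpl_def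
      by (auto intro!: derivative_eq_intros simp: r_def power2_eq_square algebra_simps)
  qed

  have a_eq: "a t' = (\<Sum>j\<in>UNIV. (W t' $ j \<bullet> ws)\<^sup>2)" if "t' \<ge> 0" for t'
    using qfW[OF that, of ws] by (simp add: ww wv orth inner_commute)
  have "((\<lambda>t'. \<Sum>j\<in>UNIV. (W t' $ j \<bullet> ws)\<^sup>2) has_real_derivative
      (\<Sum>j\<in>UNIV. 2 * (W t $ j \<bullet> ws) * (- (G t $ j \<bullet> ws)))) (at t within {0..})"
    by (intro DERIV_sum comp_deriv flow[OF t0])
  moreover have "(\<Sum>j\<in>UNIV. 2 * (W t $ j \<bullet> ws) * (- (G t $ j \<bullet> ws))) = - 2 * (G t \<bullet> HS)"
    by (simp add: inner_mat_rows HS_def sum_distrib_left sum_negf mult_ac)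
  ultimately have D1: "((\<lambda>t'. \<Sum>j\<in>UNIV. (W t' $ j \<bullet> ws)\<^sup>2) has_real_derivative (- 2 * (G t \<bullet> HS))) (at t within {0..})"
    by simp
  have Da: "(a has_real_derivative (- 2 * (G t \<bullet> HS))) (at t within {0..})"
    by (rule has_field_derivative_transform_within[OF D1 zero_less_one]) (use t0 a_eq in auto)

  have b_eq: "b t' = (\<Sum>j\<in>UNIV. (W t' $ j \<bullet> v)\<^sup>2)" if "t' \<ge> 0" for t'
    using qfW[OF that, of v] by (simp add: vv wv orth inner_commute)
  have "((\<lambda>t'. \<Sum>j\<in>UNIV. (W t' $ j \<bullet> v)\<^sup>2) has_real_derivative
      (\<Sum>j\<in>UNIV. 2 * (W t $ j \<bullet> v) * (- (G t $ j \<bullet> v)))) (at t within {0..})"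
    by (intro DERIV_sum comp_deriv flow[OF t0])
  moreover have "(\<Sum>j\<in>UNIV. 2 * (W t $ j \<bullet> v) * (- (G t $ j \<bullet> v))) = - 2 * (G t \<bullet> HV)"
    by (simp add: inner_mat_rows HV_def sum_distrib_left sum_negf mult_ac)
  ultimately have D2: "((\<lambda>t'. \<Sum>j\<in>UNIV. (W t' $ j \<bullet> v)\<^sup>2) has_real_derivative (- 2 * (G t \<bullet> HV))) (at t within {0..})"
    by simp
  have Db: "(b has_real_derivative (- 2 * (G t \<bullet> HV))) (at t within {0..})"
    by (rule has_field_derivative_transform_within[OF D2 zero_less_one]) (use t0 b_eq in auto)

  define Pn where "Pn t' = (\<Sum>j\<in>UNIV. (\<Sum>e\<in>(Basis::(real^'d) set). (W t' $ j \<bullet> e)\<^sup>2) - (W t' $ j \<bullet> ws)\<^sup>2 - (W t' $ j \<bullet> v)\<^sup>2)" for t'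
  have sumB: "(\<Sum>e\<in>(Basis::(real^'d) set). (e \<bullet> u)\<^sup>2) = u \<bullet> u" for u :: "real^'d"
    by (simp add: euclidean_inner[of u u] power2_eq_square inner_commute)
  have c_eq: "c t' = Pn t' / (d - 2)" if "t' \<ge> 0" for t'
  proof -
    have "(\<Sum>j\<in>UNIV. \<Sum>e\<in>(Basis::(real^'d) set). (W t' $ j \<bullet> e)\<^sup>2)
        = (\<Sum>e\<in>(Basis::(real^'d) set). \<Sum>j\<in>UNIV. (W t' $ j \<bullet> e)\<^sup>2)"
      by (rule sum.swap)
    also have "\<dots> = (\<Sum>e\<in>(Basis::(real^'d) set). a t' * (e \<bullet> ws)\<^sup>2 + b t' * (e \<bullet> v)\<^sup>2
        + c t' * (e \<bullet> e - (e \<bullet> ws)\<^sup>2 - (e \<bullet> v)\<^sup>2))"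
      by (simp add: qfW[OF that])
    also have "\<dots> = a t' + b t' + c t' * (d - 2)"
      by (simp add: sum.distrib sum_subtractf sum_distrib_left[symmetric] sumB ww vv sum_Basis_1 d_def
          algebra_simps)
    finally have "Pn t' = a t' + b t' + c t' * (d - 2) - a t' - b t'"
      unfolding Pn_def sum_subtractf a_eq[OF that, symmetric] b_eq[OF that, symmetric] by simp
    then show ?thesis using d3' by (simp add: field_simps)
  qed
  have "(Pn has_real_derivative
      (\<Sum>j\<in>UNIV. (\<Sum>e\<in>(Basis::(real^'d) set). 2 * (W t $ j \<bullet> e) * (- (G t $ j \<bullet> e)))
         - 2 * (W t $ j \<bullet> ws) * (- (G t $ j \<bullet> ws)) - 2 * (W t $ j \<bullet> v) * (- (G t $ j \<bullet> v)))) (at t within {0..})"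
    unfolding Pn_def[abs_def]
    by (intro DERIV_sum DERIV_diff comp_deriv flow[OF t0])
  moreover have "(\<Sum>j\<in>UNIV. (\<Sum>e\<in>(Basis::(real^'d) set). 2 * (W t $ j \<bullet> e) * (- (G t $ j \<bullet> e)))
         - 2 * (W t $ j \<bullet> ws) * (- (G t $ j \<bullet> ws)) - 2 * (W t $ j \<bullet> v) * (- (G t $ j \<bullet> v))) = - 2 * (G t \<bullet> HP)"
  proof -
    have "(\<Sum>e\<in>(Basis::(real^'d) set). 2 * (W t $ j \<bullet> e) * (- (G t $ j \<bullet> e))) = - 2 * (G t $ j \<bullet> W t $ j)" for j
      by (simp add: euclidean_inner[of "G t $ j" "W t $ j"] sum_distrib_left sum_negf mult_ac)
    then show ?thesis
      by (simp add: inner_mat_rows HP_def inner_diff_right sum_distrib_left sum_negf sum_subtractf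
          sum.distrib inner_commute algebra_simps)
  qed
  ultimately have "(Pn has_real_derivative (- 2 * (G t \<bullet> HP))) (at t within {0..})" by simp
  then have "((\<lambda>t'. Pn t' / (d - 2)) has_real_derivative (- 2 * (G t \<bullet> HP) / (d - 2))) (at t within {0..})"
    by (rule DERIV_cdivide)
  then have Dc: "(c has_real_derivative (- 2 * (G t \<bullet> HP) / (d - 2))) (at t within {0..})"
    by (rule has_field_derivative_transform_within[OF _ zero_less_one]) (use t0 c_eq in auto)

  show "let r = a t + (1 + lam) * b t + (real CARD('d) - 2) * c t;
          g_w = 8 * (a t - 1) + 4 * (r - 1);
          g_v = 8 * (1 + lam)\<^sup>2 * b t + 4 * (1 + lam) * (r - 1);
          g_p = 8 * c t + 4 * (r - 1)
      in (a has_real_derivative (- 2 * g_w * a t)) (at t within {0..})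
       \<and> (b has_real_derivative (- 2 * g_v * b t)) (at t within {0..})
       \<and> (c has_real_derivative (- 2 * g_p * c t)) (at t within {0..})"
    unfolding Let_def d_def[symmetric] r_def[symmetric]
  proof (intro conjI)
    show "(a has_real_derivative (- 2 * (8 * (a t - 1) + 4 * (r - 1)) * a t)) (at t within {0..})"
      using Da unfolding DS by (simp add: algebra_simps)
    show "(b has_real_derivative (- 2 * (8 * (1 + lam)\<^sup>2 * b t + 4 * (1 + lam) * (r - 1)) * b t)) (at t within {0..})"
      using Db unfolding DV by (simp add: algebra_simps)
    have "- 2 * (G t \<bullet> HP) / (d - 2) = - 2 * (8 * c t + 4 * (r - 1)) * c t"
      unfolding DP using d3' by (simp add: field_simps)
    then show "(c has_real_derivative (- 2 * (8 * c t + 4 * (r - 1)) * c t)) (at t within {0..})"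
      using Dc by simp
  qed
qed

end
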